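(* For $n\ge 2$, the number of shallow $132$-avoiding centrosymmetric permutations in $S_n$ equals $\lceil (n+1)/2\rceil$.
   Context: For $\pi\in S_n$: $D(\pi)=\sum_{i}|\pi_i-i|$, $I(\pi)$ is the number of inversions, $T(\pi)=n-\mathrm{cyc}(\pi)$ with $\mathrm{cyc}$ the number of cycles in the disjoint cycle decomposition; $\pi$ is shallow if $I(\pi)+T(\pi)=D(\pi)$. A permutation avoids a pattern $\sigma$ if it has no subsequence order-isomorphic to $\sigma$. The reverse-complement $\pi^{rc}$ is defined by $\pi^{rc}_{n+1-i}=n+1-\pi_i$; $\pi$ is centrosymmetric if $\pi=\pi^{rc}$. *)

theory Defs
  imports Complex_Main "HOL-Combinatorics.Permutations"
begin

definition perms :: "nat \<Rightarrow> (nat \<Rightarrow> nat) set" where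
  "perms n = {p. p permutes {1..n}}"

definition displacement :: "nat \<Rightarrow> (nat \<Rightarrow> nat) \<Rightarrow> int" where
  "displacement n p = (\<Sum>i\<in>{1..n}. \<bar>int (p i) - int i\<bar>)"

definition inversions :: "nat \<Rightarrow> (nat \<Rightarrow> nat) \<Rightarrow> nat" where
  "inversions n p = card {(i, j). i \<in> {1..n} \<and> j \<in> {1..n} \<and> i < j \<and> p i > p j}"

definition cycle_at :: "(nat \<Rightarrow> nat) \<Rightarrow> nat \<Rightarrow> nat set" where
  "cycle_at p i = {(p ^^ k) i | k. True}"

definition num_cycles :: "nat \<Rightarrow> (nat \<Rightarrow> nat) \<Rightarrow> nat" where
  "num_cycles n p = card (cycle_at p ` {1..n})"

definition reflection_length :: "nat \<Rightarrow> (nat \<Rightarrow> nat) \<Rightarrow> nat" where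
  "reflection_length n p = n - num_cycles n p"

definition shallow :: "nat \<Rightarrow> (nat \<Rightarrow> nat) \<Rightarrow> bool" where
  "shallow n p \<longleftrightarrow>
     int (inversions n p) + int (reflection_length n p) = displacement n p"

definition avoids132 :: "nat \<Rightarrow> (nat \<Rightarrow> nat) \<Rightarrow> bool" where
  "avoids132 n p \<longleftrightarrow>
     \<not> (\<exists>i j k. 1 \<le> i \<and> i < j \<and> j < k \<and> k \<le> n \<and> p i < p k \<and> p k < p j)"

definition centrosymmetric :: "nat \<Rightarrow> (nat \<Rightarrow> nat) \<Rightarrow> bool" where
  "centrosymmetric n p \<longleftrightarrow> (\<forall>i\<in>{1..n}. p (n + 1 - i) = n + 1 - p i)"

end

theory Submission
  imports Defs
begin

lemma permval: "p permutes {1..n} \<Longrightarrow> 1 \<le> i \<Longrightarrow> i \<le> n \<Longrightarrow> 1 \<le> p i \<and> p i \<le> n"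
  using permutes_in_image[of p "{1..n}" i] by auto

lemma perminj: "p permutes {1..n} \<Longrightarrow> p i = p j \<Longrightarrow> i = j"
  using permutes_inj[of p "{1..n}"] by (auto dest: injD)

lemma permsurj: assumes "p permutes {1..n}" "1 \<le> w" "w \<le> n"
  obtains j where "1 \<le> j" "j \<le> n" "p j = w"
proof -
  have "w \<in> p ` {1..n}" using permutes_image[OF assms(1)] assms by auto
  then show ?thesis using that by auto
qed

lemma av213:
  assumes pp: "p permutes {1..n}" and ce: "centrosymmetric n p" and av: "avoids132 n p"
    and "1 \<le> i" "i < j" "j < k" "k \<le> n" "p j < p i" "p i < p k"
  shows False
proof -
  have "p (n + 1 - k) = n + 1 - p k" "p (n+1-j) = n+1 - p j" "p (n+1-i) = n+1-p i"
    using ce assms(4-7) unfolding centrosymmetric_def by auto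
  moreover have "p k \<le> n" using permval[OF pp, of k] assms by auto
  ultimately show False using av assms(4-9) unfolding avoids132_def
    apply (elim notE)
    apply (rule exI[of _ "n+1-k"], rule exI[of _ "n+1-j"], rule exI[of _ "n+1-i"])
    by auto
qed

lemma block:
  assumes pp: "p permutes {1..n}" and ce: "centrosymmetric n p" and av: "avoids132 n p"
    and n: "n \<ge> 1"
  shows "1 \<le> i \<Longrightarrow> i \<le> n + 1 - p 1 \<Longrightarrow> p i = p 1 + i - 1"
proof (induction i rule: less_induct)
  case (less i)
  define v where "v = p 1"
  have v: "1 \<le> v" "v \<le> n" using permval[OF pp, of 1] n v_def by auto
  show ?case
  proof (cases "i = 1")
    case True then show ?thesis by simp
  next
    case False
    hence i2: "i \<ge> 2" using less.prems by auto
    have IH: "p t = v + t - 1" if "1 \<le> t" "t < i" for t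
    proof -
      have "t \<le> n + 1 - p 1" using less.prems that by simp
      then show ?thesis using less.IH[OF that(2) that(1)] v_def by simp
    qed
    define w where "w = v + i - 1"
    have w: "1 \<le> w" "w \<le> n" using less.prems v w_def v_def by auto
    obtain j where j: "1 \<le> j" "j \<le> n" "p j = w" using permsurj[OF pp w] by blast
    have "\<not> j < i"
    proof
      assume "j < i" then have "p j = v + j - 1" using IH j by blast
      then show False using j w_def \<open>j < i\<close> v by auto
    qed
    moreover have "j \<noteq> i \<Longrightarrow> False"
    proof -
      assume ji: "j \<noteq> i"
      then have ji': "i < j" using \<open>\<not> j < i\<close> by auto
      have pin: "1 \<le> p i" "p i \<le> n" using permval[OF pp, of i] less w j ji' by auto
      have "p i \<noteq> v" using perminj[OF pp, of i 1] i2 v_def by auto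
      moreover have "p i \<noteq> w" using perminj[OF pp, of i j] ji j by auto
      moreover have "\<not> (v < p i \<and> p i < w)"
      proof
        assume a: "v < p i \<and> p i < w"
        define t where "t = p i - v + 1"
        have "p t = p i" using IH[of t] a t_def w_def by auto
        then have "t = i" using perminj[OF pp] by blast
        then show False using a t_def w_def by auto
      qed
      moreover have "\<not> p i < v"
      proof
        assume "p i < v"
        moreover have "v < p j" using j w_def i2 by simp
        ultimately show False using av213[OF pp ce av, of 1 i j] i2 ji' j v_def by auto
      qed
      moreover have "\<not> p i > w"
      proof
        assume "p i > w"
        then have "1 \<le> (1::nat) \<and> 1 < i \<and> i < j \<and> j \<le> n \<and> p 1 < p j \<and> p j < p i"
          using i2 ji' j v_def w_def by auto
        then show False using av unfolding avoids132_def by blast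
      qed
      ultimately show False by linarith
    qed
    ultimately have "j = i" by auto
    then show ?thesis using j w_def v_def by auto
  qed
qed

definition combine :: "nat \<Rightarrow> nat \<Rightarrow> (nat \<Rightarrow> nat) \<Rightarrow> nat \<Rightarrow> nat" where
 "combine m c s i = (if 1 \<le> i \<and> i \<le> c then i + m + c else if m + c < i \<and> i \<le> m + 2*c then i - (m+c)
     else if c < i \<and> i \<le> m + c then s (i - c) + c else i)"

lemma struct_lem:
  assumes pp: "p permutes {1..n}" and ce: "centrosymmetric n p" and av: "avoids132 n p"
    and n: "n \<ge> 1" and v1: "p 1 > 1"
  obtains m c s where "c \<ge> 1" "n = m + 2*c" "s permutes {1..m}" "avoids132 m s"
    "centrosymmetric m s" "p = combine m c s" "c = n + 1 - p 1"
proof -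
  define v where "v = p 1"
  have v: "2 \<le> v" "v \<le> n" using permval[OF pp, of 1] n v_def v1 by auto
  define c where "c = n + 1 - v"
  have c: "1 \<le> c" "c < n" using v c_def by auto
  have blk: "p i = v + i - 1" if "1 \<le> i" "i \<le> c" for i
    using block[OF pp ce av n that(1)] that c_def v_def by simp
  have c2: "2 * c \<le> n"
  proof (rule ccontr)
    assume "\<not> 2 * c \<le> n"
    define i' where "i' = c + 1 - v"
    have i': "1 \<le> i'" "i' \<le> c" using \<open>\<not> 2 * c \<le> n\<close> c_def v i'_def by auto
    have "p (n + 1 - i') = n + 1 - p i'" using ce i' c unfolding centrosymmetric_def by auto
    also have "p i' = c" using blk[OF i'] i'_def c_def v \<open>\<not> 2 * c \<le> n\<close> by simp
    finally have "p (n + 1 - i') = p 1" using c_def v v_def by simp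
    then have "n + 1 - i' = 1" using perminj[OF pp] by blast
    then show False using i' c by simp
  qed
  define m where "m = n - 2 * c"
  have nm: "n = m + 2 * c" using m_def c2 by simp
  have vm: "v = m + c + 1" using nm c_def v by simp
  have lst: "p i = i - (m + c)" if "m + c < i" "i \<le> m + 2*c" for i
  proof -
    define i' where "i' = n + 1 - i"
    have i': "1 \<le> i'" "i' \<le> c" "i = n + 1 - i'" using that nm i'_def by auto
    have "p (n + 1 - i') = n + 1 - p i'" using ce i' c unfolding centrosymmetric_def by auto
    then show ?thesis using blk[OF i'(1,2)] i' vm nm by simp
  qed
  have mid: "c + 1 \<le> p i \<and> p i \<le> m + c" if "c < i" "i \<le> m + c" for i
  proof -
    have r: "1 \<le> p i" "p i \<le> n" using permval[OF pp, of i] that nm by auto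
    have "\<not> p i \<le> c"
    proof
      assume a: "p i \<le> c"
      have "p (p i + (m + c)) = p i" using lst[of "p i + (m+c)"] a r by simp
      then have "p i + (m + c) = i" using perminj[OF pp] by blast
      then show False using that r by simp
    qed
    moreover have "\<not> p i > m + c"
    proof
      assume a: "p i > m + c"
      have "p (p i - (m + c)) = p i" using blk[of "p i - (m+c)"] a r nm vm by simp
      then have "p i - (m + c) = i" using perminj[OF pp] by blast
      then show False using that r a nm by simp
    qed
    ultimately show ?thesis by simp
  qed
  define s where "s j = (if 1 \<le> j \<and> j \<le> m then p (j + c) - c else j)" for j
  have comb: "p = combine m c s"
  proof
    fix i
    show "p i = combine m c s i"
    proof (cases "1 \<le> i \<and> i \<le> c")
      case True then show ?thesis using blk[of i] vm unfolding combine_def by simp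
    next
      case F1: False
      show ?thesis
      proof (cases "m + c < i \<and> i \<le> m + 2*c")
        case True then show ?thesis using lst[of i] F1 unfolding combine_def by simp
      next
        case F2: False
        show ?thesis
        proof (cases "c < i \<and> i \<le> m + c")
          case True then show ?thesis using mid[of i] F1 F2 unfolding combine_def s_def by auto
        next
          case False
          then have "i \<notin> {1..n}" using F1 F2 nm by auto
          then show ?thesis using permutes_not_in[OF pp] F1 F2 False unfolding combine_def by auto
        qed
      qed
    qed
  qed
  have sp: "s permutes {1..m}"
  proof (rule inj_imp_permutes)
    show "inj_on s {1..m}"
    proof (rule inj_onI)
      fix x y assume "x \<in> {1..m}" "y \<in> {1..m}" "s x = s y"
      then have "p (x + c) - c = p (y + c) - c" unfolding s_def by auto
      moreover have "p (x+c) \<ge> c + 1" "p (y+c) \<ge> c+1" using mid[of "x+c"] mid[of "y+c"]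
          \<open>x \<in> {1..m}\<close> \<open>y \<in> {1..m}\<close> by auto
      ultimately have "p (x + c) = p (y + c)" by simp
      then show "x = y" using perminj[OF pp] by fastforce
    qed
    show "finite {1..m}" by simp
    show "s x \<in> {1..m}" if "x \<in> {1..m}" for x using mid[of "x+c"] that unfolding s_def by auto
    show "s i = i" if "i \<notin> {1..m}" for i using that unfolding s_def by auto
  qed
  have sav: "avoids132 m s"
    unfolding avoids132_def
  proof (clarify)
    fix i j k assume a: "1 \<le> i" "i < j" "j < k" "k \<le> m" "s i < s k" "s k < s j"
    have e: "s i = p (i + c) - c" "s j = p (j + c) - c" "s k = p (k + c) - c" using a unfolding s_def by auto
    have "p (i+c) \<ge> c+1" "p (j+c) \<ge> c+1" "p (k+c) \<ge> c+1" using mid[of "i+c"] mid[of "j+c"] mid[of "k+c"] a by auto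
    then have "1 \<le> i + c \<and> i + c < j + c \<and> j + c < k + c \<and> k + c \<le> n \<and> p (i+c) < p (k+c) \<and> p (k+c) < p (j+c)"
      using a e nm by auto
    then show False using av unfolding avoids132_def by blast
  qed
  have sce: "centrosymmetric m s"
    unfolding centrosymmetric_def
  proof
    fix i assume i: "i \<in> {1..m}"
    have "i + c \<in> {1..n}" using i nm by auto
    then have "p (n + 1 - (i + c)) = n + 1 - p (i + c)" using ce unfolding centrosymmetric_def by blast
    moreover have "n + 1 - (i + c) = (m + 1 - i) + c" using i nm by auto
    moreover have "c + 1 \<le> p (i + c) \<and> p (i + c) \<le> m + c" using mid[of "i+c"] i by auto
    ultimately show "s (m + 1 - i) = m + 1 - s i" using i nm unfolding s_def by auto
  qed
  show ?thesis using that[OF c(1) nm sp sav sce comb] c_def v_def by simp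
qed


lemma disp_comb:
  shows "displacement (m+2*c) (combine m c s) = displacement m s + 2 * int c * int (m + c)"
proof -
  let ?f = "\<lambda>i. \<bar>int (combine m c s i) - int i\<bar>"
  have U: "{1..m+2*c} = {1..c} \<union> ({c+1..m+c} \<union> {m+c+1..m+2*c})" by auto
  have A: "sum ?f {1..c} = int c * int (m + c)"
  proof -
    have "sum ?f {1..c} = sum (\<lambda>i. int (m + c)) {1..c}"
      by (rule sum.cong) (auto simp: combine_def)
    then show ?thesis by simp
  qed
  have B: "sum ?f {m+c+1..m+2*c} = int c * int (m + c)"
  proof -
    have "sum ?f {m+c+1..m+2*c} = sum (\<lambda>i. int (m + c)) {m+c+1..m+2*c}"
      by (rule sum.cong) (auto simp: combine_def)
    then show ?thesis by simp
  qed
  have C: "sum ?f {c+1..m+c} = displacement m s"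
  proof -
    have "sum ?f {1+c..m+c} = sum (\<lambda>i. ?f (i + c)) {1..m}"
      by (rule sum.shift_bounds_cl_nat_ivl)
    also have "\<dots> = sum (\<lambda>i. \<bar>int (s i) - int i\<bar>) {1..m}"
      by (rule sum.cong) (auto simp: combine_def)
    finally show ?thesis unfolding displacement_def by (simp add: add.commute)
  qed
  have "displacement (m+2*c) (combine m c s) = sum ?f {1..c} + (sum ?f {c+1..m+c} + sum ?f {m+c+1..m+2*c})"
    unfolding displacement_def U
    by (subst sum.union_disjoint, simp, simp, force, subst sum.union_disjoint, auto)
  then show ?thesis using A B C by simp
qed


lemma inv_comb:
  assumes sp: "s permutes {1..m}"
  shows "inversions (m+2*c) (combine m c s) = inversions m s + c * (m + c) + m * c"
proof -
  have sv: "1 \<le> s x \<and> s x \<le> m" if "1 \<le> x" "x \<le> m" for x using permval[OF sp] that by auto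
  define Ss where "Ss = {(i, j). i \<in> {1..m} \<and> j \<in> {1..m} \<and> i < j \<and> s i > s j}"
  define sh where "sh = (\<lambda>(i::nat, j::nat). (i + c, j + c))"
  define S where "S = {(i, j). i \<in> {1..m+2*c} \<and> j \<in> {1..m+2*c} \<and> i < j \<and> combine m c s i > combine m c s j}"
  define B where "B = {1..c} \<times> {c+1..m+2*c}"
  define C where "C = {c+1..m+c} \<times> {m+c+1..m+2*c}"
  have eq: "S = sh ` Ss \<union> B \<union> C"
  proof
    show "S \<subseteq> sh ` Ss \<union> B \<union> C"
    proof
      fix x assume "x \<in> S"
      then obtain i j where x: "x = (i, j)" "1 \<le> i" "i < j" "j \<le> m + 2*c"
        "combine m c s i > combine m c s j" unfolding S_def by auto
      show "x \<in> sh ` Ss \<union> B \<union> C"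
      proof (cases "i \<le> c")
        case True
        then have "\<not> j \<le> c" using x unfolding combine_def by auto
        then show ?thesis using True x unfolding B_def by auto
      next
        case F: False
        show ?thesis
        proof (cases "i \<le> m + c")
          case True
          show ?thesis
          proof (cases "j \<le> m + c")
            case True
            then have "s (i - c) > s (j - c)" using F \<open>i \<le> m + c\<close> x unfolding combine_def by auto
            then have "(i - c, j - c) \<in> Ss" using F True x unfolding Ss_def by auto
            moreover have "x = sh (i - c, j - c)" using F x True unfolding sh_def by auto
            ultimately show ?thesis by blast
          next
            case False then show ?thesis using F \<open>i \<le> m + c\<close> x unfolding C_def by auto
          qed
        next
          case False then show ?thesis using x unfolding combine_def by auto
        qed
      qed
    qed
    show "sh ` Ss \<union> B \<union> C \<subseteq> S"
    proof
      fix x assume "x \<in> sh ` Ss \<union> B \<union> C"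
      then consider "x \<in> sh ` Ss" | "x \<in> B" | "x \<in> C" by blast
      then show "x \<in> S"
      proof cases
        case 1
        then obtain i j where "(i, j) \<in> Ss" "x = (i + c, j + c)" unfolding sh_def by auto
        then show ?thesis unfolding S_def Ss_def combine_def by auto
      next
        case 2
        then obtain i j where ij: "x = (i, j)" "1 \<le> i" "i \<le> c" "c < j" "j \<le> m + 2 * c" unfolding B_def by auto
        have "combine m c s j \<le> m + c"
        proof (cases "j \<le> m + c")
          case True then show ?thesis using sv[of "j - c"] ij unfolding combine_def by auto
        next
          case False then show ?thesis using ij unfolding combine_def by auto
        qed
        then show ?thesis using ij unfolding S_def by (auto simp: combine_def)
      next
        case 3
        then obtain i j where ij: "x = (i, j)" "c < i" "i \<le> m + c" "m + c < j" "j \<le> m + 2 * c" unfolding C_def by auto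
        have "combine m c s j \<le> c" using ij unfolding combine_def by auto
        moreover have "combine m c s i > c"
        proof -
          have "1 \<le> s (i - c)" using ij sv[of "i - c"] by auto
          then show ?thesis using ij unfolding combine_def by auto
        qed
        ultimately show ?thesis using ij unfolding S_def by auto
      qed
    qed
  qed
  have fin: "finite Ss" unfolding Ss_def by (rule finite_subset[of _ "{1..m} \<times> {1..m}"]) auto
  have injsh: "inj sh" unfolding sh_def by (auto simp: inj_def)
  have d1: "(sh ` Ss) \<inter> B = {}" unfolding sh_def B_def Ss_def by auto
  have d2: "(sh ` Ss \<union> B) \<inter> C = {}" unfolding sh_def B_def C_def Ss_def by auto
  have "card S = card (sh ` Ss) + card B + card C"
    unfolding eq
    by (subst card_Un_disjoint) (use fin d1 d2 in \<open>auto simp: B_def C_def card_Un_disjoint\<close>)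
  moreover have "card (sh ` Ss) = card Ss" using injsh by (simp add: card_image inj_on_subset)
  moreover have "card B = c * (m + c)" unfolding B_def by (simp add: card_cartesian_product)
  moreover have "card C = m * c" unfolding C_def by (simp add: card_cartesian_product)
  ultimately show ?thesis unfolding inversions_def S_def Ss_def by simp
qed


lemma funpow_perm: "s permutes S \<Longrightarrow> x \<in> S \<Longrightarrow> (s ^^ k) x \<in> S"
  by (induction k) (auto simp: permutes_in_image)

lemma cyc_comb:
  assumes sp: "s permutes {1..m}"
  shows "num_cycles (m+2*c) (combine m c s) = num_cycles m s + c"
    and "num_cycles m s \<le> m"
proof -
  let ?p = "combine m c s"
  have f1: "(?p ^^ k) i = (if even k then i else i + m + c)" if "1 \<le> i" "i \<le> c" for i k
    using that by (induction k) (auto simp: combine_def)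
  have f3: "(?p ^^ k) i = (if even k then i else i - (m + c))" if "m + c < i" "i \<le> m + 2*c" for i k
    using that by (induction k) (auto simp: combine_def)
  have f2: "(?p ^^ k) i = (s ^^ k) (i - c) + c" if "c < i" "i \<le> m + c" for i k
  proof (induction k)
    case 0 then show ?case using that by simp
  next
    case (Suc k)
    have "i - c \<in> {1..m}" using that by auto
    then have "(s ^^ k) (i - c) \<in> {1..m}" using funpow_perm[OF sp] by blast
    then show ?case using Suc by (simp add: combine_def)
  qed
  define F where "F i = {i, i + m + c}" for i
  define G where "G j = (\<lambda>x. x + c) ` cycle_at s j" for j
  have c1: "cycle_at ?p i = F i" if "1 \<le> i" "i \<le> c" for i
  proof
    show "cycle_at ?p i \<subseteq> F i"
    proof
      fix x assume "x \<in> cycle_at ?p i"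
      then obtain k where "x = (?p ^^ k) i" unfolding cycle_at_def by blast
      then show "x \<in> F i" unfolding F_def using f1[OF that, of k] by simp
    qed
    have "(?p ^^ 0) i = i" "(?p ^^ 1) i = i + m + c" using f1[OF that, of 0] f1[OF that, of 1] by simp_all
    then show "F i \<subseteq> cycle_at ?p i" unfolding cycle_at_def F_def by (metis (mono_tags, lifting) empty_subsetI insert_subset mem_Collect_eq)
  qed
  have c3: "cycle_at ?p i = F (i - (m + c))" if "m + c < i" "i \<le> m + 2*c" for i
  proof
    show "cycle_at ?p i \<subseteq> F (i - (m + c))"
    proof
      fix x assume "x \<in> cycle_at ?p i"
      then obtain k where "x = (?p ^^ k) i" unfolding cycle_at_def by blast
      then show "x \<in> F (i - (m + c))" unfolding F_def using f3[OF that, of k] that by auto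
    qed
    have "(?p ^^ 0) i = i" "(?p ^^ 1) i = i - (m + c)" using f3[OF that, of 0] f3[OF that, of 1] by simp_all
    moreover have "i - (m + c) + m + c = i" using that by simp
    ultimately show "F (i - (m + c)) \<subseteq> cycle_at ?p i" unfolding cycle_at_def F_def by (metis (mono_tags, lifting) empty_subsetI insert_subset mem_Collect_eq)
  qed
  have c2: "cycle_at ?p i = G (i - c)" if "c < i" "i \<le> m + c" for i
    unfolding G_def cycle_at_def using f2[OF that] by auto
  have img: "cycle_at ?p ` {1..m+2*c} = F ` {1..c} \<union> G ` {1..m}"
  proof
    show "cycle_at ?p ` {1..m+2*c} \<subseteq> F ` {1..c} \<union> G ` {1..m}"
    proof
      fix X assume "X \<in> cycle_at ?p ` {1..m+2*c}"
      then obtain i where i: "1 \<le> i" "i \<le> m + 2*c" "X = cycle_at ?p i" by auto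
      show "X \<in> F ` {1..c} \<union> G ` {1..m}"
      proof (cases "i \<le> c")
        case True then show ?thesis using c1 i by auto
      next
        case False
        show ?thesis
        proof (cases "i \<le> m + c")
          case True then show ?thesis using c2[of i] i False by force
        next
          case F2: False
          then have "i - (m + c) \<in> {1..c}" using i by auto
          then show ?thesis using c3[of i] i F2 by auto
        qed
      qed
    qed
    show "F ` {1..c} \<union> G ` {1..m} \<subseteq> cycle_at ?p ` {1..m+2*c}"
    proof
      fix X assume "X \<in> F ` {1..c} \<union> G ` {1..m}"
      then consider i where "1 \<le> i" "i \<le> c" "X = F i" | j where "1 \<le> j" "j \<le> m" "X = G j" by auto
      then show "X \<in> cycle_at ?p ` {1..m+2*c}"
      proof cases
        case 1 then show ?thesis using c1[of i] by force
      next
        case 2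
        then have "X = cycle_at ?p (j + c)" using c2[of "j + c"] by auto
        moreover have "j + c \<in> {1..m+2*c}" using 2 by auto
        ultimately show ?thesis by blast
      qed
    qed
  qed
  have injF: "inj_on F {1..c}"
  proof (rule inj_onI)
    fix x y assume "x \<in> {1..c}" "y \<in> {1..c}" "F x = F y"
    then have "x \<in> F y" unfolding F_def by auto
    then show "x = y" using \<open>x \<in> {1..c}\<close> \<open>y \<in> {1..c}\<close> unfolding F_def by auto
  qed
  have Geq: "G ` {1..m} = (\<lambda>A. (\<lambda>x. x + c) ` A) ` (cycle_at s ` {1..m})"
    unfolding G_def by (simp add: image_image)
  have injI: "inj (\<lambda>A. (\<lambda>x::nat. x + c) ` A)"
    by (rule injI) (simp add: inj_image_eq_iff inj_def)
  have cG: "card (G ` {1..m}) = num_cycles m s"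
    unfolding Geq num_cycles_def by (rule card_image) (rule inj_on_subset[OF injI], simp)
  have cF: "card (F ` {1..c}) = c" using card_image[OF injF] by simp
  have sub: "cycle_at s j \<subseteq> {1..m}" if "j \<in> {1..m}" for j
    unfolding cycle_at_def using funpow_perm[OF sp that] by auto
  have disj: "F ` {1..c} \<inter> G ` {1..m} = {}"
  proof (rule ccontr)
    assume "F ` {1..c} \<inter> G ` {1..m} \<noteq> {}"
    then obtain X where "X \<in> F ` {1..c}" "X \<in> G ` {1..m}" by blast
    then obtain i j where ij: "i \<in> {1..c}" "j \<in> {1..m}" "F i = G j" by (metis imageE)
    then have "i \<in> G j" unfolding F_def by auto
    then obtain y where "y \<in> cycle_at s j" "i = y + c" unfolding G_def by auto
    then show False using sub[OF ij(2)] ij(1) by auto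
  qed
  show "num_cycles (m+2*c) (combine m c s) = num_cycles m s + c"
    unfolding num_cycles_def img
    by (subst card_Un_disjoint) (use disj cF cG in \<open>auto simp: num_cycles_def\<close>)
  show "num_cycles m s \<le> m" unfolding num_cycles_def
    using card_image_le[of "{1..m}" "cycle_at s"] by simp
qed

definition slack :: "nat \<Rightarrow> (nat \<Rightarrow> nat) \<Rightarrow> int" where
  "slack n p = displacement n p - int (inversions n p) - int (reflection_length n p)"

lemma slack_comb:
  assumes sp: "s permutes {1..m}"
  shows "slack (m+2*c) (combine m c s) = slack m s + int c * int c - int c"
proof -
  have r: "reflection_length (m+2*c) (combine m c s) = reflection_length m s + c"
    unfolding reflection_length_def using cyc_comb[OF sp] by simp
  show ?thesis unfolding slack_def r disp_comb inv_comb[OF sp]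
    by (simp add: algebra_simps)
qed


definition q :: "nat \<Rightarrow> nat \<Rightarrow> nat \<Rightarrow> nat" where
  "q n k i = (if (1 \<le> i \<and> i \<le> k) \<or> (n - k < i \<and> i \<le> n) then n + 1 - i else i)"

lemma q0: "q n 0 = id"
  by (auto simp: q_def fun_eq_iff)

lemma q_invol: "2 * k \<le> n \<Longrightarrow> q n k (q n k i) = i"
  unfolding q_def by auto

lemma q_perm: assumes "2 * k \<le> n" shows "q n k permutes {1..n}"
proof (rule inj_imp_permutes)
  show "inj_on (q n k) {1..n}"
    by (rule inj_onI) (metis q_invol[OF assms])
  show "finite {1..n}" by simp
  show "q n k x \<in> {1..n}" if "x \<in> {1..n}" for x using that assms unfolding q_def by auto
  show "q n k i = i" if "i \<notin> {1..n}" for i using that assms unfolding q_def by auto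
qed

lemma q_centro: assumes "2 * k \<le> n" shows "centrosymmetric n (q n k)"
  unfolding centrosymmetric_def q_def using assms by auto

lemma q_avoid: assumes "2 * k \<le> n" shows "avoids132 n (q n k)"
  unfolding avoids132_def q_def using assms by auto

lemma q_comb: assumes "2 * k \<le> m" shows "q (m + 2) (k + 1) = combine m 1 (q m k)"
  unfolding fun_eq_iff q_def combine_def using assms by auto


lemma slack_id: "slack n id = 0"
proof -
  have d: "displacement n id = 0" unfolding displacement_def by simp
  have "inversions n id = card ({}::(nat \<times> nat) set)" unfolding inversions_def
    by (rule arg_cong[where f=card]) auto
  then have i: "inversions n id = 0" by simp
  have "cycle_at id i = {i}" for i unfolding cycle_at_def by auto
  then have "cycle_at id ` {1..n} = (\<lambda>i. {i}) ` {1..n}" by auto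
  then have "num_cycles n id = n" unfolding num_cycles_def by (simp add: card_image)
  then show ?thesis unfolding slack_def reflection_length_def d i by simp
qed

lemma combine_inj:
  assumes "s permutes {1..m}" "t permutes {1..m}" "combine m c s = combine m c t"
  shows "s = t"
proof
  fix j
  show "s j = t j"
  proof (cases "1 \<le> j \<and> j \<le> m")
    case True
    have "combine m c s (j + c) = combine m c t (j + c)" using assms(3) by simp
    then show ?thesis using True unfolding combine_def by auto
  next
    case False
    then show ?thesis using permutes_not_in[OF assms(1)] permutes_not_in[OF assms(2)] by auto
  qed
qed

lemma main:
  "p permutes {1..n} \<Longrightarrow> avoids132 n p \<Longrightarrow> centrosymmetric n p \<Longrightarrow>
    slack n p \<ge> 0 \<and> (slack n p = 0 \<longleftrightarrow> (\<exists>k \<le> n div 2. p = q n k))"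
proof (induction n arbitrary: p rule: less_induct)
  case (less n p)
  note pp = less.prems(1) and av = less.prems(2) and ce = less.prems(3)
  show ?case
  proof (cases "n = 0")
    case True
    then have "p = id" using pp by simp
    then have "slack n p = 0" "p = q n 0" using slack_id q0 by simp_all
    then show ?thesis by auto
  next
    case False
    then have n1: "n \<ge> 1" by simp
    have p1: "1 \<le> p 1" using permval[OF pp, of 1] n1 by auto
    show ?thesis
    proof (cases "p 1 = 1")
      case True
      have "p i = i" for i
      proof (cases "1 \<le> i \<and> i \<le> n")
        case True
        then show ?thesis using block[OF pp ce av n1, of i] \<open>p 1 = 1\<close> by simp
      next
        case False then show ?thesis using permutes_not_in[OF pp] by auto
      qed
      then have "p = id" by auto
      then have "slack n p = 0" "p = q n 0" using slack_id q0 by simp_all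
      then show ?thesis by auto
    next
      case False
      then have v1: "p 1 > 1" using p1 by simp
      obtain m c s where mcs: "c \<ge> 1" "n = m + 2*c" "s permutes {1..m}" "avoids132 m s"
        "centrosymmetric m s" "p = combine m c s" "c = n + 1 - p 1"
        using struct_lem[OF pp ce av n1 v1] by blast
      have mn: "m < n" using mcs(1,2) by simp
      have IH: "slack m s \<ge> 0 \<and> (slack m s = 0 \<longleftrightarrow> (\<exists>k \<le> m div 2. s = q m k))"
        using less.IH[OF mn mcs(3-5)] .
      have sl: "slack n p = slack m s + int c * int c - int c"
        using slack_comb[OF mcs(3), of c] mcs(2,6) by simp
      have cc: "int c * int c - int c \<ge> 0" using mcs(1) by (simp add: mult_le_cancel_right1) 
      have "slack n p \<ge> 0" using IH sl cc by simp
      moreover have "slack n p = 0 \<longleftrightarrow> (\<exists>k \<le> n div 2. p = q n k)"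
      proof
        assume "slack n p = 0"
        note z = this
        have sm0: "slack m s = 0" using IH sl cc z by linarith
        have "int c * int c = int c" using IH sl cc z by linarith
        then have "c * c = 1 * c" by (metis of_nat_eq_iff of_nat_mult mult_1)
        then have c1: "c = 1" using mcs(1) by (simp only: mult_cancel_right) simp
        obtain k where k: "k \<le> m div 2" "s = q m k" using IH sm0 by blast
        have k2: "2 * k \<le> m" using k(1) by simp
        have "p = combine m 1 (q m k)" using mcs(6) k(2) c1 by simp
        also have "\<dots> = q (m + 2) (k + 1)" using q_comb[OF k2] by simp
        finally have "p = q n (k + 1)" using mcs(2) c1 by simp
        moreover have "k + 1 \<le> n div 2" using k mcs(2) c1 by simp
        ultimately show "\<exists>k \<le> n div 2. p = q n k" by blast
      next
        assume "\<exists>k \<le> n div 2. p = q n k"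
        then obtain k where k: "k \<le> n div 2" "p = q n k" by blast
        have "k \<noteq> 0"
        proof
          assume "k = 0"
          then have "p 1 = 1" using k(2) q0 by simp
          then show False using v1 by simp
        qed
        then have "p 1 = n" using k n1 unfolding q_def by auto
        then have c1: "c = 1" using mcs(7) by simp
        have m2: "n = m + 2" using mcs(2) c1 by simp
        have km: "2 * (k - 1) \<le> m" using k m2 \<open>k \<noteq> 0\<close> by simp
        have "q n k = combine m 1 (q m (k - 1))" using q_comb[OF km] m2 \<open>k \<noteq> 0\<close> by simp
        then have "combine m 1 s = combine m 1 (q m (k - 1))" using mcs(6) c1 k(2) by simp
        then have "s = q m (k - 1)" by (rule combine_inj[OF mcs(3) q_perm[OF km]])
        moreover have "k - 1 \<le> m div 2" using km by simp
        ultimately have "slack m s = 0" using IH by blast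
        then show "slack n p = 0" using sl c1 by simp
      qed
      ultimately show ?thesis by blast
    qed
  qed
qed

lemma ceil_half: "nat (ceiling ((real n + 1) / 2)) = n div 2 + 1"
proof -
  have "ceiling ((real n + 1) / 2) = int (n div 2 + 1)"
  proof (rule ceiling_unique)
    show "real_of_int (int (n div 2 + 1)) - 1 < (real n + 1) / 2"
    proof -
      have "(n div 2) * 2 \<le> n" by simp
      then have "real (n div 2) * 2 \<le> real n" by (metis of_nat_le_iff of_nat_mult of_nat_numeral)
      then show ?thesis by simp
    qed
    have "real (n div 2) * 2 \<ge> real n - 1"
    proof -
      have "n \<le> (n div 2) * 2 + 1" by simp
      then show ?thesis by linarith
    qed
    then show "(real n + 1) / 2 \<le> real_of_int (int (n div 2 + 1))" by simp
  qed
  then show ?thesis by simp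
qed

theorem theorem3p7:
  fixes n :: nat
  assumes "n \<ge> 2"
  shows "card {p \<in> perms n. shallow n p \<and> avoids132 n p \<and> centrosymmetric n p}
           = nat (ceiling ((real n + 1) / 2))"
proof -
  have sh: "shallow n p \<longleftrightarrow> slack n p = 0" for p unfolding shallow_def slack_def by auto
  have eq: "{p \<in> perms n. shallow n p \<and> avoids132 n p \<and> centrosymmetric n p} = q n ` {0..n div 2}"
  proof
    show "{p \<in> perms n. shallow n p \<and> avoids132 n p \<and> centrosymmetric n p} \<subseteq> q n ` {0..n div 2}"
    proof
      fix p assume "p \<in> {p \<in> perms n. shallow n p \<and> avoids132 n p \<and> centrosymmetric n p}"
      then have "p permutes {1..n}" "avoids132 n p" "centrosymmetric n p" "slack n p = 0"
        unfolding perms_def sh by auto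
      then obtain k where "k \<le> n div 2" "p = q n k" using main by blast
      then show "p \<in> q n ` {0..n div 2}" by auto
    qed
    show "q n ` {0..n div 2} \<subseteq> {p \<in> perms n. shallow n p \<and> avoids132 n p \<and> centrosymmetric n p}"
    proof
      fix p assume "p \<in> q n ` {0..n div 2}"
      then obtain k where k: "k \<le> n div 2" "p = q n k" by auto
      have k2: "2 * k \<le> n" using k by simp
      have "p permutes {1..n}" "avoids132 n p" "centrosymmetric n p"
        using q_perm[OF k2] q_avoid[OF k2] q_centro[OF k2] k by auto
      moreover have "slack n p = 0" using main[OF calculation] k by blast
      ultimately show "p \<in> {p \<in> perms n. shallow n p \<and> avoids132 n p \<and> centrosymmetric n p}"
        unfolding perms_def sh by auto
    qed
  qed
  have inj: "inj_on (q n) {0..n div 2}"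
  proof (rule inj_onI)
    fix k k' assume a0: "k \<in> {0..n div 2}" "k' \<in> {0..n div 2}" "q n k = q n k'"
    then have a: "2 * k \<le> n" "2 * k' \<le> n" "q n k = q n k'" by auto
    show "k = k'"
    proof (rule ccontr)
      assume "k \<noteq> k'"
      then consider "k < k'" | "k' < k" by linarith
      then show False
      proof cases
        case 1
        have "q n k (k + 1) = q n k' (k + 1)" using a(3) by simp
        moreover have "q n k (k + 1) = k + 1" using 1 a(1,2) unfolding q_def by auto
        moreover have "q n k' (k + 1) = n - k" using 1 a(1,2) unfolding q_def by auto
        ultimately show False using 1 a(1,2) by simp
      next
        case 2
        have "q n k (k' + 1) = q n k' (k' + 1)" using a(3) by simp
        moreover have "q n k' (k' + 1) = k' + 1" using 2 a(1,2) unfolding q_def by auto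
        moreover have "q n k (k' + 1) = n - k'" using 2 a(1,2) unfolding q_def by auto
        ultimately show False using 2 a(1,2) by simp
      qed
    qed
  qed
  show ?thesis unfolding eq ceil_half using card_image[OF inj] by simp
qed

end
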